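(* For the algorithm described in the context (under Assumptions (A1), (A2), (A3)), for each of the two step-size choices $\gamma_t(i)=\beta(t)$ and $\gamma_t(i)=\beta(n_t(i))$, almost surely for every state $i\in S$: $\sum_{t=0}^\infty q_{\mu_t}(i)\gamma_t(i)=\infty$ and $\sum_{t=0}^\infty q_{\mu_t}(i)^2\gamma_t(i)^2<\infty$.
   Context: Let $\alpha\in(0,1)$ and let $X$ be a Markov decision process with finite state space $S=\{1,\dots,n\}$, finite nonempty action sets $\mathcal A(i)$ ($i\in S$), transition probabilities $P_{ij}(u)$ ($u\in\mathcal A(i)$) and deterministic costs $c(i,u)\ge 0$. A policy is a map $\mu$ with $\mu(i)\in\mathcal A(i)$ for all $i$; it induces a Markov chain $X^\mu$ with transition probabilities $P_{ij}(\mu(i))$. A fixed probability distribution $p$ on $S$ is used as the initial distribution for all policies, and $q_\mu(i)$ denotes the probability that $X^\mu$ with $X^\mu_0\sim p$ ever visits $i$. Assumption (A1): $q_\mu(i)>0$ for every policy $\mu$ and every $i\in S$ (hence, as there are finitely many policies, $q_\mu(i)\ge\delta$ for some $\delta>0$). Assumption (A2): for all $i,j\in S$ and $u,v\in\mathcal A(i)$, $P_{ij}(u)>0$ iff $P_{ij}(v)>0$. The reachability graph is $G=(S,E)$ with $E=\{(i,j):P_{ij}(u)>0\text{ for some }u\}$; $\mathcal T$ denotes its set of transient states. Assumption (A3): the subgraph of $G$ induced by $\mathcal T$ is acyclic. Algorithm: set $J_0=0$. At iteration $t=0,1,2,\dots$: choose a greedy policy $\mu_t$ with respect to $J_t$,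 i.e. $\mu_t(i)\in\arg\min_{u\in\mathcal A(i)}[c(i,u)+\alpha\sum_jP_{ij}(u)J_t(j)]$; independently of the past, draw $X_0^{\mu_t}\sim p$ and simulate a trajectory $(X^{\mu_t}_k)_{k\ge0}$ under $\mu_t$. Let $N_t(i)=\inf\{k: X^{\mu_t}_k=i\}$ and, when $N_t(i)<\infty$, $\tilde J^{\mu_t}(i)=\sum_{k\ge N_t(i)}\alpha^{k-N_t(i)}c(X^{\mu_t}_k,\mu_t(X^{\mu_t}_k))$. Then $J_{t+1}(i)=(1-\gamma_t(i))J_t(i)+\gamma_t(i)\tilde J^{\mu_t}(i)$ if $N_t(i)<\infty$, and $J_{t+1}(i)=J_t(i)$ otherwise. Step sizes: $\beta:\mathbb N\to(0,1]$ deterministic with $\sum_t\beta(t)=\infty$, $\sum_t\beta(t)^2<\infty$, and $\beta$ nonincreasing for $t>T_0$ for some constant $T_0$. $n_t(i)=\sum_{\tau<t}\mathbf 1\{\text{trajectory at iteration }\tau\text{ visits }i\}$ is the number of iterations before $t$ whose trajectory visited $i$. *)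

theory Defs
  imports "HOL-Probability.Probability"
begin

text \<open>Randomness of one iteration: an initial state drawn from p, and for every
  time step k and every state-action pair (s,u) an independent next state drawn
  from P s u (random-mapping representation of the controlled chain).\<close>

definition iter_space :: "'s pmf \<Rightarrow> ('s \<Rightarrow> 'a \<Rightarrow> 's pmf) \<Rightarrow> ('s \<times> (nat \<Rightarrow> 's \<times> 'a \<Rightarrow> 's)) measure" where
  "iter_space p P = measure_pmf p \<Otimes>\<^sub>M
     (\<Pi>\<^sub>M k\<in>(UNIV::nat set). \<Pi>\<^sub>M su\<in>UNIV. measure_pmf (P (fst su) (snd su)))"

definition Omega :: "'s pmf \<Rightarrow> ('s \<Rightarrow> 'a \<Rightarrow> 's pmf) \<Rightarrow> (nat \<Rightarrow> 's \<times> (nat \<Rightarrow> 's \<times> 'a \<Rightarrow> 's)) measure" where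
  "Omega p P = (\<Pi>\<^sub>M t\<in>(UNIV::nat set). iter_space p P)"

primrec traj :: "('s \<Rightarrow> 'a) \<Rightarrow> ('s \<times> (nat \<Rightarrow> 's \<times> 'a \<Rightarrow> 's)) \<Rightarrow> nat \<Rightarrow> 's" where
  "traj mu w 0 = fst w"
| "traj mu w (Suc k) = snd w k (traj mu w k, mu (traj mu w k))"

definition policy :: "('s \<Rightarrow> 'a set) \<Rightarrow> ('s \<Rightarrow> 'a) \<Rightarrow> bool" where
  "policy A mu \<longleftrightarrow> (\<forall>s. mu s \<in> A s)"

definition visit_prob :: "'s pmf \<Rightarrow> ('s \<Rightarrow> 'a \<Rightarrow> 's pmf) \<Rightarrow> ('s \<Rightarrow> 'a) \<Rightarrow> 's \<Rightarrow> real" where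
  "visit_prob p P mu i = measure (iter_space p P) {w \<in> space (iter_space p P). \<exists>k. traj mu w k = i}"

definition Qval :: "('s \<Rightarrow> 'a \<Rightarrow> real) \<Rightarrow> real \<Rightarrow> ('s \<Rightarrow> 'a \<Rightarrow> 's::finite pmf) \<Rightarrow> ('s \<Rightarrow> real) \<Rightarrow> 's \<Rightarrow> 'a \<Rightarrow> real" where
  "Qval c \<alpha> P J s u = c s u + \<alpha> * (\<Sum>j\<in>UNIV. pmf (P s u) j * J j)"

definition greedy_sel :: "('s \<Rightarrow> 'a set) \<Rightarrow> ('s \<Rightarrow> 'a \<Rightarrow> real) \<Rightarrow> real \<Rightarrow> ('s \<Rightarrow> 'a \<Rightarrow> 's::finite pmf)
    \<Rightarrow> (('s \<Rightarrow> real) \<Rightarrow> 's \<Rightarrow> 'a) \<Rightarrow> bool" where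
  "greedy_sel A c \<alpha> P sel \<longleftrightarrow>
     (\<forall>J s. sel J s \<in> A s \<and> (\<forall>u\<in>A s. Qval c \<alpha> P J s (sel J s) \<le> Qval c \<alpha> P J s u))"

definition reach_edges :: "('s \<Rightarrow> 'a set) \<Rightarrow> ('s \<Rightarrow> 'a \<Rightarrow> 's pmf) \<Rightarrow> ('s \<times> 's) set" where
  "reach_edges A P = {(i, j). \<exists>u\<in>A i. pmf (P i u) j > 0}"

definition transient_states :: "('s \<Rightarrow> 'a set) \<Rightarrow> ('s \<Rightarrow> 'a \<Rightarrow> 's pmf) \<Rightarrow> 's set" where
  "transient_states A P = {i. \<exists>j. (i, j) \<in> (reach_edges A P)\<^sup>* \<and> (j, i) \<notin> (reach_edges A P)\<^sup>*}"

definition first_visit :: "(nat \<Rightarrow> 's) \<Rightarrow> 's \<Rightarrow> nat" where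
  "first_visit x i = (LEAST k. x k = i)"

definition tail_cost :: "('s \<Rightarrow> 'a \<Rightarrow> real) \<Rightarrow> real \<Rightarrow> ('s \<Rightarrow> 'a) \<Rightarrow> (nat \<Rightarrow> 's) \<Rightarrow> nat \<Rightarrow> real" where
  "tail_cost c \<alpha> mu x N = (\<Sum>m. \<alpha> ^ m * c (x (N + m)) (mu (x (N + m))))"

text \<open>State of the algorithm before iteration t: (J_t, n_t). The step size used at
  iteration t for state i is step t (n_t i).\<close>
primrec alg :: "('s \<Rightarrow> 'a \<Rightarrow> real) \<Rightarrow> real \<Rightarrow> (('s \<Rightarrow> real) \<Rightarrow> 's \<Rightarrow> 'a) \<Rightarrow> (nat \<Rightarrow> nat \<Rightarrow> real)
    \<Rightarrow> (nat \<Rightarrow> 's \<times> (nat \<Rightarrow> 's \<times> 'a \<Rightarrow> 's)) \<Rightarrow> nat \<Rightarrow> ('s \<Rightarrow> real) \<times> ('s \<Rightarrow> nat)" where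
  "alg c \<alpha> sel step \<omega> 0 = (\<lambda>_. 0, \<lambda>_. 0)"
| "alg c \<alpha> sel step \<omega> (Suc t) =
     (let J = fst (alg c \<alpha> sel step \<omega> t); n = snd (alg c \<alpha> sel step \<omega> t);
          mu = sel J; x = traj mu (\<omega> t)
      in (\<lambda>i. if \<exists>k. x k = i
               then (1 - step t (n i)) * J i + step t (n i) * tail_cost c \<alpha> mu x (first_visit x i)
               else J i,
          \<lambda>i. if \<exists>k. x k = i then Suc (n i) else n i))"

end

theory Submission
  imports Defs
begin


lemma indep_coord:
  fixes M :: "'x measure"
  assumes M: "prob_space M"
    and g: "g \<in> borel_measurable (PiM UNIV (\<lambda>_::nat. M))"
    and gi: "\<And>\<omega> y. g (fun_upd \<omega> t y) = g \<omega>"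
    and W: "W \<in> sets M"
  shows "(\<integral>\<^sup>+\<omega>. g \<omega> * indicator W (\<omega> t) \<partial>PiM UNIV (\<lambda>_. M)) = (\<integral>\<^sup>+\<omega>. g \<omega> \<partial>PiM UNIV (\<lambda>_. M)) * emeasure M W"
proof -
  let ?O = "PiM UNIV (\<lambda>_::nat. M)"
  interpret O: prob_space ?O by (rule prob_space_PiM) (use M in auto)
  interpret Mp: prob_space M by (rule M)
  interpret pair_sigma_finite M ?O by unfold_locales
  have meas: "(\<lambda>(x, X). fun_upd X t x) \<in> measurable (M \<Otimes>\<^sub>M ?O) ?O"
  proof -
    have "(\<lambda>z i. (\<lambda>i z. if i = t then fst z else snd z i) i z) \<in> measurable (M \<Otimes>\<^sub>M ?O) ?O"
      by (rule measurable_PiM_single') (auto simp: space_pair_measure space_PiM)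
    moreover have "(\<lambda>z i. (\<lambda>i z. if i = t then fst z else snd z i) i z) = (\<lambda>(x, X). fun_upd X t x)"
      by (auto simp: fun_eq_iff)
    ultimately show ?thesis by metis
  qed
  have D: "distr (M \<Otimes>\<^sub>M ?O) ?O (\<lambda>(x, X). fun_upd X t x) = ?O"
    using distr_pair_PiM_eq_PiM[of UNIV "\<lambda>_. M" t] M by simp
  have "(\<integral>\<^sup>+\<omega>. g \<omega> * indicator W (\<omega> t) \<partial>?O)
      = (\<integral>\<^sup>+\<omega>. g \<omega> * indicator W (\<omega> t) \<partial>distr (M \<Otimes>\<^sub>M ?O) ?O (\<lambda>(x, X). fun_upd X t x))"
    by (simp add: D)
  also have "\<dots> = (\<integral>\<^sup>+z. g (fun_upd (snd z) t (fst z)) * indicator W (fst z) \<partial>(M \<Otimes>\<^sub>M ?O))"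
    by (subst nn_integral_distr[OF meas]) (use g W in \<open>auto simp: split_beta'\<close>)
  also have "\<dots> = (\<integral>\<^sup>+z. g (snd z) * indicator W (fst z) \<partial>(M \<Otimes>\<^sub>M ?O))"
    by (simp add: gi)
  also have "\<dots> = (\<integral>\<^sup>+X. \<integral>\<^sup>+x. g X * indicator W x \<partial>M \<partial>?O)"
    by (subst nn_integral_snd[symmetric]) (use g W in auto)
  also have "\<dots> = (\<integral>\<^sup>+X. g X * emeasure M W \<partial>?O)"
    by (intro nn_integral_cong) (use W in \<open>simp add: nn_integral_cmult\<close>)
  also have "\<dots> = (\<integral>\<^sup>+\<omega>. g \<omega> \<partial>?O) * emeasure M W"
    by (rule nn_integral_multc) (use g in auto)
  finally show ?thesis .
qed

definition cntW :: "'x set \<Rightarrow> (nat \<Rightarrow> 'x) \<Rightarrow> nat \<Rightarrow> nat" where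
  "cntW W w t = (\<Sum>s<t. if w s \<in> W then 1 else 0)"

lemma cntW_Suc: "cntW W w (Suc t) = cntW W w t + (if w t \<in> W then 1 else 0)"
  by (simp add: cntW_def)

lemma cntW_upd: "cntW W (fun_upd w t y) t = cntW W w t"
  unfolding cntW_def by (intro sum.cong) auto

lemma cntW_meas:
  assumes W: "W \<in> sets M"
  shows "(\<lambda>w. cntW W w t) \<in> measurable (PiM UNIV (\<lambda>_::nat. M)) (count_space UNIV)"
proof (induction t)
  case 0 then show ?case by (simp add: cntW_def)
next
  case (Suc t)
  have "(\<lambda>w. (\<lambda>n w. n + (if w t \<in> W then 1 else 0)) (cntW W w t) w) \<in> measurable (PiM UNIV (\<lambda>_::nat. M)) (count_space UNIV)"
  proof (rule measurable_compose_countable'[OF _ Suc])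
    fix n :: nat
    have ST: "{w \<in> space (PiM UNIV (\<lambda>_::nat. M)). w t \<in> W} \<in> sets (PiM UNIV (\<lambda>_::nat. M))"
      using W by (intro sets_Collect_single) auto
    have "(\<lambda>w. if w t \<in> W then n + 1 else n) \<in> measurable (PiM UNIV (\<lambda>_::nat. M)) (count_space UNIV)"
      by (rule measurable_If[where P="\<lambda>w. w t \<in> W", OF measurable_const measurable_const ST]) auto
    moreover have "(\<lambda>w. if w t \<in> W then n + 1 else n) = (\<lambda>w. n + (if w t \<in> W then 1 else 0))"
      by auto
    ultimately show "(\<lambda>w. n + (if w t \<in> W then 1 else 0)) \<in> measurable (PiM UNIV (\<lambda>_::nat. M)) (count_space UNIV)"
      by metis
  qed auto
  then show ?case by (simp add: cntW_Suc)
qed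

lemma cntW_partial:
  fixes f :: "nat \<Rightarrow> ennreal"
  shows "(\<Sum>t<T. f (cntW W w t) * indicator W (w t)) \<le> (\<Sum>m<cntW W w T. f m)"
proof (induction T)
  case 0 then show ?case by (simp add: cntW_def)
next
  case (Suc T)
  show ?case
  proof (cases "w T \<in> W")
    case True
    have "(\<Sum>t<Suc T. f (cntW W w t) * indicator W (w t)) = (\<Sum>t<T. f (cntW W w t) * indicator W (w t)) + f (cntW W w T)"
      using True by simp
    also have "\<dots> \<le> (\<Sum>m<cntW W w T. f m) + f (cntW W w T)"
      using Suc.IH by (rule add_right_mono)
    also have "\<dots> = (\<Sum>m<cntW W w (Suc T). f m)"
      using True by (simp add: cntW_Suc)
    finally show ?thesis .
  next
    case False
    then show ?thesis using Suc.IH by (simp add: cntW_Suc)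
  qed
qed

lemma AE_summable_cnt:
  fixes M :: "'x measure" and f :: "nat \<Rightarrow> real"
  assumes M: "prob_space M" and W: "W \<in> sets M" and Wpos: "emeasure M W > 0"
    and f0: "\<And>m. 0 \<le> f m" and fs: "summable f"
  shows "AE w in PiM UNIV (\<lambda>_::nat. M). summable (\<lambda>t. f (cntW W w t))"
proof -
  let ?O = "PiM UNIV (\<lambda>_::nat. M)"
  interpret O: prob_space ?O by (rule prob_space_PiM) (use M in auto)
  interpret Mp: prob_space M by (rule M)
  have gm: "(\<lambda>w. ennreal (f (cntW W w t))) \<in> borel_measurable ?O" for t
    using measurable_compose[OF cntW_meas[OF W, of t], of "\<lambda>n. ennreal (f n)" borel] by simp
  have key: "(\<integral>\<^sup>+w. ennreal (f (cntW W w t)) * indicator W (w t) \<partial>?O)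
      = (\<integral>\<^sup>+w. ennreal (f (cntW W w t)) \<partial>?O) * emeasure M W" for t
    by (rule indep_coord[OF M gm _ W]) (simp add: cntW_upd)
  have pw: "(\<Sum>t. ennreal (f (cntW W w t)) * indicator W (w t)) \<le> ennreal (suminf f)" for w
  proof (rule suminf_le_const[OF summableI])
    fix T
    have "(\<Sum>t<T. ennreal (f (cntW W w t)) * indicator W (w t)) \<le> (\<Sum>m<cntW W w T. ennreal (f m))"
      by (rule cntW_partial)
    also have "\<dots> \<le> (\<Sum>m. ennreal (f m))"
      by (rule sum_le_suminf) auto
    also have "\<dots> = ennreal (suminf f)"
      by (rule suminf_ennreal2[OF f0 fs])
    finally show "(\<Sum>t<T. ennreal (f (cntW W w t)) * indicator W (w t)) \<le> ennreal (suminf f)" .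
  qed
  have "(\<integral>\<^sup>+w. (\<Sum>t. ennreal (f (cntW W w t))) \<partial>?O) * emeasure M W
      = (\<Sum>t. \<integral>\<^sup>+w. ennreal (f (cntW W w t)) \<partial>?O) * emeasure M W"
    by (subst nn_integral_suminf) (use gm in auto)
  also have "\<dots> = (\<Sum>t. (\<integral>\<^sup>+w. ennreal (f (cntW W w t)) \<partial>?O) * emeasure M W)"
    by (rule ennreal_suminf_multc[symmetric])
  also have "\<dots> = (\<Sum>t. \<integral>\<^sup>+w. ennreal (f (cntW W w t)) * indicator W (w t) \<partial>?O)"
    by (simp add: key)
  also have "\<dots> = (\<integral>\<^sup>+w. (\<Sum>t. ennreal (f (cntW W w t)) * indicator W (w t)) \<partial>?O)"
  proof (rule nn_integral_suminf[symmetric])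
    fix t
    have "{w \<in> space ?O. w t \<in> W} \<in> sets ?O"
      using W by (intro sets_Collect_single) auto
    then have "(\<lambda>w. indicator W (w t) :: ennreal) \<in> borel_measurable ?O"
      by (rule borel_measurable_indicator')
    then show "(\<lambda>w. ennreal (f (cntW W w t)) * indicator W (w t)) \<in> borel_measurable ?O"
      using gm by (rule borel_measurable_times_ennreal[rotated])
  qed
  also have "\<dots> \<le> (\<integral>\<^sup>+w. ennreal (suminf f) \<partial>?O)"
    by (rule nn_integral_mono) (rule pw)
  also have "\<dots> = ennreal (suminf f)"
    by (simp add: O.emeasure_space_1)
  finally have le: "(\<integral>\<^sup>+w. (\<Sum>t. ennreal (f (cntW W w t))) \<partial>?O) * emeasure M W \<le> ennreal (suminf f)" .
  have "(\<integral>\<^sup>+w. (\<Sum>t. ennreal (f (cntW W w t))) \<partial>?O) \<noteq> \<infinity>"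
  proof
    assume inf: "(\<integral>\<^sup>+w. (\<Sum>t. ennreal (f (cntW W w t))) \<partial>?O) = \<infinity>"
    then have "(\<integral>\<^sup>+w. (\<Sum>t. ennreal (f (cntW W w t))) \<partial>?O) * emeasure M W = \<infinity>"
      using Wpos by (simp add: ennreal_mult_eq_top_iff)
    with le show False by (simp add: top_unique)
  qed
  then have "AE w in ?O. (\<Sum>t. ennreal (f (cntW W w t))) \<noteq> \<infinity>"
    by (intro nn_integral_PInf_AE) (use gm in auto)
  then show ?thesis
    by (rule eventually_mono) (auto intro: summable_suminf_not_top f0)
qed


lemma space_iter[simp]: "space (iter_space p P) = UNIV"
  by (simp add: iter_space_def space_pair_measure space_PiM)

lemma prob_iter: "prob_space (iter_space p P)"
  unfolding iter_space_def
  by (intro prob_space_pair prob_space_PiM prob_space_measure_pmf)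

inductive reachp :: "'s pmf \<Rightarrow> ('s \<Rightarrow> 'a set) \<Rightarrow> ('s \<Rightarrow> 'a \<Rightarrow> 's pmf) \<Rightarrow> 's \<Rightarrow> bool"
  for p A P where
  base: "s \<in> set_pmf p \<Longrightarrow> reachp p A P s"
| step: "reachp p A P s \<Longrightarrow> u \<in> A s \<Longrightarrow> s' \<in> set_pmf (P s u) \<Longrightarrow> reachp p A P s'"

lemma AE_snd_pair:
  assumes N1: "prob_space N1" and N2: "prob_space N2" and ae: "AE x in N2. Q x"
  shows "AE w in N1 \<Otimes>\<^sub>M N2. Q (snd w)"
proof -
  interpret N1: prob_space N1 by (rule N1)
  interpret N2: prob_space N2 by (rule N2)
  interpret pair_sigma_finite N1 N2 by unfold_locales
  from ae obtain S where S: "S \<in> null_sets N2" "{x\<in>space N2. \<not> Q x} \<subseteq> S"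
    by (auto elim: AE_E3 simp: eventually_ae_filter)
  have "emeasure (N1 \<Otimes>\<^sub>M N2) (space N1 \<times> S) = emeasure N1 (space N1) * emeasure N2 S"
    using S by (intro N2.emeasure_pair_measure_Times) auto
  then have "space N1 \<times> S \<in> null_sets (N1 \<Otimes>\<^sub>M N2)"
    using S by (auto simp: null_sets_def)
  then show ?thesis
    by (rule AE_I') (use S in \<open>auto simp: space_pair_measure\<close>)
qed

lemma AE_fst_pair:
  assumes N1: "prob_space N1" and N2: "prob_space N2" and ae: "AE x in N1. Q x"
  shows "AE w in N1 \<Otimes>\<^sub>M N2. Q (fst w)"
proof -
  interpret N2: prob_space N2 by (rule N2)
  show ?thesis
    by (rule AE_distrD[OF measurable_fst]) (subst N2.distr_pair_fst, rule ae)
qed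

lemma reach_of_A1:
  fixes A :: "'s::finite \<Rightarrow> 'a set"
  assumes actions: "\<forall>s. A s \<noteq> {}"
    and A1: "\<forall>mu. policy A mu \<longrightarrow> (\<forall>i. visit_prob p P mu i > 0)"
  shows "reachp p A P i"
proof (rule ccontr)
  assume nr: "\<not> reachp p A P i"
  define mu0 where "mu0 = (\<lambda>s. SOME u. u \<in> A s)"
  have pol: "policy A mu0"
    unfolding policy_def mu0_def using actions by (simp add: some_in_eq)
  let ?M = "iter_space p P"
  let ?N = "\<Pi>\<^sub>M k\<in>(UNIV::nat set). \<Pi>\<^sub>M su\<in>UNIV. measure_pmf (P (fst su) (snd su))"
  have pN: "prob_space ?N" by (intro prob_space_PiM prob_space_measure_pmf)
  have ae1: "AE w in ?M. fst w \<in> set_pmf p"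
    unfolding iter_space_def by (rule AE_fst_pair[OF prob_space_measure_pmf pN AE_measure_pmf])
  have "AE x in ?N. \<forall>k s. x k (s, mu0 s) \<in> set_pmf (P s (mu0 s))"
    unfolding AE_all_countable
  proof (intro allI)
    fix k s
    have a1: "AE y in measure_pmf (P (fst (s, mu0 s)) (snd (s, mu0 s))). y \<in> set_pmf (P s (mu0 s))"
      unfolding fst_conv snd_conv by (rule AE_measure_pmf)
    have a2: "AE y in (\<Pi>\<^sub>M su\<in>UNIV. measure_pmf (P (fst su) (snd su))). y (s, mu0 s) \<in> set_pmf (P s (mu0 s))"
      by (rule AE_PiM_component[of UNIV "\<lambda>su. measure_pmf (P (fst su) (snd su))" "(s, mu0 s)", OF _ _ a1])
         (auto simp: prob_space_measure_pmf)
    show "AE x in ?N. x k (s, mu0 s) \<in> set_pmf (P s (mu0 s))"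
      by (rule AE_PiM_component[of UNIV "\<lambda>_. \<Pi>\<^sub>M su\<in>UNIV. measure_pmf (P (fst su) (snd su))" k, OF _ _ a2])
         (auto intro!: prob_space_measure_pmf prob_space_PiM)
  qed
  then have ae2: "AE w in ?M. \<forall>k s. snd w k (s, mu0 s) \<in> set_pmf (P s (mu0 s))"
    unfolding iter_space_def by (rule AE_snd_pair[OF prob_space_measure_pmf pN])
  have "AE w in ?M. \<forall>k. reachp p A P (traj mu0 w k)"
    using ae1 ae2
  proof eventually_elim
    case (elim w)
    show ?case
    proof
      fix k show "reachp p A P (traj mu0 w k)"
      proof (induction k)
        case 0 then show ?case using elim by (auto intro: reachp.base)
      next
        case (Suc k)
        then show ?case using elim pol
          by (auto simp: policy_def intro: reachp.step)
      qed
    qed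
  qed
  then have ae3: "AE w in ?M. \<not> (\<exists>k. traj mu0 w k = i)"
    by eventually_elim (use nr in auto)
  have "visit_prob p P mu0 i = 0"
  proof (cases "{w \<in> space ?M. \<exists>k. traj mu0 w k = i} \<in> sets ?M")
    case True
    then have "emeasure ?M {w \<in> space ?M. \<exists>k. traj mu0 w k = i} = 0"
      using ae3 AE_iff_measurable[OF True, of "\<lambda>w. \<not> (\<exists>k. traj mu0 w k = i)"] by simp
    then show ?thesis unfolding visit_prob_def by (simp add: measure_def)
  next
    case False
    then show ?thesis unfolding visit_prob_def by (simp add: measure_notin_sets)
  qed
  with A1 pol show False by (metis less_irrefl)
qed

lemma reach_inv:
  fixes A :: "'s::finite \<Rightarrow> 'a set"
  assumes actions: "\<forall>s. finite (A s)"
    and A2: "\<forall>i j. \<forall>u\<in>A i. \<forall>v\<in>A i. pmf (P i u) j > 0 \<longleftrightarrow> pmf (P i v) j > 0"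
    and r: "reachp p A P i"
  shows "\<exists>k s0 B. s0 \<in> set_pmf p \<and>
    (\<forall>j<k. B j \<in> sets (\<Pi>\<^sub>M su\<in>UNIV. measure_pmf (P (fst su) (snd su))) \<and>
           emeasure (\<Pi>\<^sub>M su\<in>UNIV. measure_pmf (P (fst su) (snd su))) (B j) > 0) \<and>
    (\<forall>mu. policy A mu \<longrightarrow> (\<forall>w. fst w = s0 \<and> (\<forall>j<k. snd w j \<in> B j) \<longrightarrow> traj mu w k = i))"
  using r
proof induction
  case (base s)
  then show ?case by (intro exI[of _ 0] exI[of _ s]) auto
next
  case (step s u s')
  let ?N = "\<Pi>\<^sub>M su\<in>UNIV. measure_pmf (P (fst su) (snd su))"
  from step.IH obtain k s0 B where s0: "s0 \<in> set_pmf p"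
    and B: "\<forall>j<k. B j \<in> sets ?N \<and> emeasure ?N (B j) > 0"
    and tr: "\<forall>mu. policy A mu \<longrightarrow> (\<forall>w. fst w = s0 \<and> (\<forall>j<k. snd w j \<in> B j) \<longrightarrow> traj mu w k = s)"
    by blast
  define J where "J = (\<lambda>v. (s, v)) ` A s"
  define C where "C = prod_emb UNIV (\<lambda>su. measure_pmf (P (fst su) (snd su))) J (\<Pi>\<^sub>E su\<in>J. {s'})"
  have fJ: "finite J" unfolding J_def using actions by auto
  have Cs: "C \<in> sets ?N"
    unfolding C_def by (rule sets_PiM_I) (use fJ in auto)
  have "emeasure ?N C = (\<Prod>su\<in>J. emeasure (measure_pmf (P (fst su) (snd su))) {s'})"
    unfolding C_def by (rule emeasure_PiM_emb) (use fJ in \<open>auto intro: prob_space_measure_pmf\<close>)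
  also have "\<dots> > 0"
  proof -
  have "emeasure (measure_pmf (P (fst su) (snd su))) {s'} > 0" if "su \<in> J" for su
  proof -
    from that obtain v where v: "v \<in> A s" "su = (s, v)" unfolding J_def by auto
    have "pmf (P s u) s' > 0" using step.hyps by (simp add: pmf_positive)
    then have "pmf (P s v) s' > 0" using A2 v step.hyps by blast
    then show "emeasure (measure_pmf (P (fst su) (snd su))) {s'} > 0"
      using v by (simp add: emeasure_pmf_single)
  qed
  then show ?thesis using fJ by (simp add: zero_less_iff_neq_zero prod_zero_iff)
  qed
  finally have Cpos: "emeasure ?N C > 0" .
  have Cmem: "y \<in> C \<Longrightarrow> v \<in> A s \<Longrightarrow> y (s, v) = s'" for y v
    unfolding C_def J_def prod_emb_def
    by (auto simp: PiE_iff) (metis (no_types, lifting) image_eqI restrict_apply')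
  show ?case
  proof (intro exI[of _ "Suc k"] exI[of _ s0] exI[of _ "B(k := C)"] conjI allI impI)
    show "s0 \<in> set_pmf p" by (rule s0)
  next
    fix j assume "j < Suc k"
    then show "(B(k := C)) j \<in> sets ?N" "emeasure ?N ((B(k := C)) j) > 0"
      using B Cs Cpos by (auto simp: less_Suc_eq)
  next
    fix mu w assume pol: "policy A mu" and w: "fst w = s0 \<and> (\<forall>j<Suc k. snd w j \<in> (B(k := C)) j)"
    have "\<forall>j<k. snd w j \<in> B j"
    proof (intro allI impI)
      fix j assume "j < k"
      then show "snd w j \<in> B j" using w[THEN conjunct2, rule_format, of j] by simp
    qed
    then have "traj mu w k = s" using tr[rule_format, OF pol, of w] w by blast
    moreover have "snd w k \<in> C" using w by auto
    moreover have "mu s \<in> A s" using pol by (simp add: policy_def)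
    ultimately show "traj mu w (Suc k) = s'" by (simp add: Cmem)
  qed
qed

lemma good_set:
  fixes A :: "'s::finite \<Rightarrow> 'a set"
  assumes actions: "\<forall>s. finite (A s)"
    and A2: "\<forall>i j. \<forall>u\<in>A i. \<forall>v\<in>A i. pmf (P i u) j > 0 \<longleftrightarrow> pmf (P i v) j > 0"
    and r: "reachp p A P i"
  shows "\<exists>W \<in> sets (iter_space p P). emeasure (iter_space p P) W > 0 \<and>
     (\<forall>mu. policy A mu \<longrightarrow> (\<forall>w\<in>W. \<exists>k. traj mu w k = i))"
proof -
  let ?N = "\<Pi>\<^sub>M su\<in>UNIV. measure_pmf (P (fst su) (snd su))"
  let ?NN = "\<Pi>\<^sub>M k\<in>(UNIV::nat set). ?N"
  obtain k s0 B where s0: "s0 \<in> set_pmf p"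
    and B: "\<forall>j<k. B j \<in> sets ?N \<and> emeasure ?N (B j) > 0"
    and tr: "\<forall>mu. policy A mu \<longrightarrow> (\<forall>w. fst w = s0 \<and> (\<forall>j<k. snd w j \<in> B j) \<longrightarrow> traj mu w k = i)"
    using reach_inv[OF actions A2 r] by blast
  define E where "E = prod_emb UNIV (\<lambda>_::nat. ?N) {..<k} (\<Pi>\<^sub>E j\<in>{..<k}. B j)"
  define W where "W = {s0} \<times> E"
  have pN: "prob_space ?N" by (intro prob_space_PiM prob_space_measure_pmf)
  have pNN: "prob_space ?NN" by (intro prob_space_PiM prob_space_measure_pmf)
  interpret NN: prob_space ?NN by (rule pNN)
  have Es: "E \<in> sets ?NN"
    unfolding E_def by (rule sets_PiM_I) (use B in auto)
  have Ws: "W \<in> sets (iter_space p P)"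
    unfolding W_def iter_space_def using Es by (intro pair_measureI) auto
  have "emeasure (iter_space p P) W = emeasure (measure_pmf p) {s0} * emeasure ?NN E"
    unfolding W_def iter_space_def using Es by (intro NN.emeasure_pair_measure_Times) auto
  also have "emeasure ?NN E = (\<Prod>j<k. emeasure ?N (B j))"
    unfolding E_def by (rule emeasure_PiM_emb) (use B pN in auto)
  also have "emeasure (measure_pmf p) {s0} * (\<Prod>j<k. emeasure ?N (B j)) > 0"
    using s0 B by (auto simp: zero_less_iff_neq_zero prod_zero_iff emeasure_pmf_single pmf_positive set_pmf_iff)
  finally have Wpos: "emeasure (iter_space p P) W > 0" .
  have "\<forall>mu. policy A mu \<longrightarrow> (\<forall>w\<in>W. \<exists>k. traj mu w k = i)"
  proof (intro allI impI ballI)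
    fix mu w assume pol: "policy A mu" and w: "w \<in> W"
    then have "fst w = s0 \<and> (\<forall>j<k. snd w j \<in> B j)"
      unfolding W_def E_def prod_emb_def by (auto simp: PiE_iff)
    then show "\<exists>k. traj mu w k = i" using tr pol by blast
  qed
  with Ws Wpos show ?thesis by blast
qed



lemma pos_tendsto_contra:
  fixes b :: "nat \<Rightarrow> real"
  assumes bpos: "\<And>m. 0 < b m" and lim: "(\<lambda>t. b (g t)) \<longlonglongrightarrow> 0"
  shows "\<forall>M. \<forall>\<^sub>F t in sequentially. M < g t"
proof
  fix M
  define c where "c = Min (b ` {..M})"
  have c: "c > 0" unfolding c_def using bpos by (subst Min_gr_iff) auto
  have cle: "m \<le> M \<Longrightarrow> c \<le> b m" for m unfolding c_def by (intro Min_le) auto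
  have "\<forall>\<^sub>F t in sequentially. b (g t) < c"
  proof -
    have "\<forall>\<^sub>F t in sequentially. dist (b (g t)) 0 < c" using lim c by (rule tendstoD)
    then show ?thesis by (rule eventually_mono) (simp add: dist_real_def)
  qed
  then show "\<forall>\<^sub>F t in sequentially. M < g t"
    by (rule eventually_mono) (metis cle not_le)
qed

lemma partial_count:
  fixes b :: "nat \<Rightarrow> real"
  assumes b0: "\<And>m. 0 \<le> b m" and g0: "g 0 = 0" and gs: "\<And>t. g (Suc t) = g t \<or> g (Suc t) = Suc (g t)"
  shows "(\<Sum>m<g T. b m) \<le> (\<Sum>t<T. b (g t))"
proof (induction T)
  case 0 then show ?case by (simp add: g0)
next
  case (Suc T)
  show ?case
  proof (cases "g (Suc T) = g T")
    case True then show ?thesis using Suc b0[of "g T"] by simp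
  next
    case False
    then have "g (Suc T) = Suc (g T)" using gs by blast
    then show ?thesis using Suc by simp
  qed
qed

lemma div_count:
  fixes b :: "nat \<Rightarrow> real"
  assumes bpos: "\<And>m. 0 < b m" and nb: "\<not> summable b"
    and g0: "g 0 = 0" and gs: "\<And>t. g (Suc t) = g t \<or> g (Suc t) = Suc (g t)"
  shows "\<not> summable (\<lambda>t. b (g t))"
proof
  assume s: "summable (\<lambda>t. b (g t))"
  have b0: "\<And>m. 0 \<le> b m" using bpos less_imp_le by blast
  have lim: "(\<lambda>t. b (g t)) \<longlonglongrightarrow> 0" using s by (rule summable_LIMSEQ_zero)
  have "summable b"
  proof (rule summableI_nonneg_bounded[OF b0])
    fix M
    have "\<forall>\<^sub>F t in sequentially. M < g t" using pos_tendsto_contra[of b g, OF bpos lim] by blast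
    then obtain N where "\<forall>n\<ge>N. M < g n" by (auto simp: eventually_sequentially)
    then have T: "M < g N" by simp
    define T where "T = N"
    from T have T: "M < g T" by (simp add: T_def)
    have "(\<Sum>m<M. b m) \<le> (\<Sum>m<g T. b m)"
      using T b0 by (intro sum_mono2) auto
    also have "\<dots> \<le> (\<Sum>t<T. b (g t))" by (rule partial_count[OF b0 g0 gs])
    also have "\<dots> \<le> (\<Sum>t. b (g t))" by (rule sum_le_suminf[OF s]) (use b0 in auto)
    finally show "(\<Sum>m<M. b m) \<le> (\<Sum>t. b (g t))" .
  qed
  with nb show False by simp
qed

lemma div_mult:
  fixes x q :: "nat \<Rightarrow> real"
  assumes x0: "\<And>t. 0 \<le> x t" and nx: "\<not> summable x" and d: "0 < d" and qd: "\<And>t. d \<le> q t"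
  shows "\<not> summable (\<lambda>t. q t * x t)"
proof
  assume "summable (\<lambda>t. q t * x t)"
  moreover have "norm (d * x t) \<le> q t * x t" for t
  proof -
    have "norm (d * x t) = d * x t" using d x0[of t] by simp
    also have "\<dots> \<le> q t * x t" by (rule mult_right_mono[OF qd x0])
    finally show ?thesis .
  qed
  ultimately have "summable (\<lambda>t. d * x t)"
    by (rule summable_comparison_test'[where N=0])
  then have "summable x" using d by simp
  with nx show False by simp
qed



theorem lemma4:
  fixes A :: "'s::finite \<Rightarrow> 'a set" and P :: "'s \<Rightarrow> 'a \<Rightarrow> 's pmf"
    and c :: "'s \<Rightarrow> 'a \<Rightarrow> real" and \<alpha> :: real and p :: "'s pmf"
    and \<beta> :: "nat \<Rightarrow> real" and T0 :: nat
    and sel :: "('s \<Rightarrow> real) \<Rightarrow> 's \<Rightarrow> 'a" and step :: "nat \<Rightarrow> nat \<Rightarrow> real"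
  assumes alpha: "0 < \<alpha>" "\<alpha> < 1"
    and actions: "\<forall>s. finite (A s) \<and> A s \<noteq> {}"
    and costs: "\<forall>s. \<forall>u\<in>A s. 0 \<le> c s u"
    and A1: "\<forall>mu. policy A mu \<longrightarrow> (\<forall>i. visit_prob p P mu i > 0)"
    and A2: "\<forall>i j. \<forall>u\<in>A i. \<forall>v\<in>A i. pmf (P i u) j > 0 \<longleftrightarrow> pmf (P i v) j > 0"
    and A3: "acyclic (reach_edges A P \<inter> (transient_states A P \<times> transient_states A P))"
    and greedy: "greedy_sel A c \<alpha> P sel"
    and beta_range: "\<forall>t. 0 < \<beta> t \<and> \<beta> t \<le> 1"
    and beta_div: "\<not> summable \<beta>"
    and beta_sq: "summable (\<lambda>t. (\<beta> t)\<^sup>2)"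
    and beta_mono: "\<forall>t t'. T0 < t \<and> t \<le> t' \<longrightarrow> \<beta> t' \<le> \<beta> t"
    and step_choice: "step = (\<lambda>t n. \<beta> t) \<or> step = (\<lambda>t n. \<beta> n)"
  shows "AE \<omega> in Omega p P. \<forall>i.
     \<not> summable (\<lambda>t. visit_prob p P (sel (fst (alg c \<alpha> sel step \<omega> t))) i
                        * step t (snd (alg c \<alpha> sel step \<omega> t) i))
   \<and> summable (\<lambda>t. (visit_prob p P (sel (fst (alg c \<alpha> sel step \<omega> t))) i
                        * step t (snd (alg c \<alpha> sel step \<omega> t) i))\<^sup>2)"
proof -
  let ?M = "iter_space p P"
  interpret Mp: prob_space ?M by (rule prob_iter)
  have pol: "\<And>J. policy A (sel J)" using greedy unfolding greedy_sel_def policy_def by blast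
  have finP: "finite {mu. policy A mu}"
  proof -
    have "{mu. policy A mu} = PiE UNIV A" by (auto simp: policy_def PiE_iff)
    then show ?thesis using actions by (simp add: finite_PiE)
  qed
  have q1: "\<And>mu i. visit_prob p P mu i \<le> 1" unfolding visit_prob_def by (rule Mp.prob_le_1)
  have q0: "\<And>mu i. 0 \<le> visit_prob p P mu i" unfolding visit_prob_def by (rule measure_nonneg)
  have bpos: "\<And>m. 0 < \<beta> m" using beta_range by blast
  have b0: "\<And>m. 0 \<le> \<beta> m" using bpos less_imp_le by blast
  have "AE \<omega> in Omega p P.
     \<not> summable (\<lambda>t. visit_prob p P (sel (fst (alg c \<alpha> sel step \<omega> t))) i
                        * step t (snd (alg c \<alpha> sel step \<omega> t) i))
   \<and> summable (\<lambda>t. (visit_prob p P (sel (fst (alg c \<alpha> sel step \<omega> t))) i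
                        * step t (snd (alg c \<alpha> sel step \<omega> t) i))\<^sup>2)" for i
  proof -
    define d where "d = Min ((\<lambda>mu. visit_prob p P mu i) ` {mu. policy A mu})"
    have ne: "{mu. policy A mu} \<noteq> {}" using pol by blast
    have dpos: "d > 0" unfolding d_def using finP ne A1 by (subst Min_gr_iff) auto
    have dle: "d \<le> visit_prob p P (sel J) i" for J unfolding d_def using finP pol by (intro Min_le) auto
    define qq where "qq = (\<lambda>\<omega> t. visit_prob p P (sel (fst (alg c \<alpha> sel step \<omega> t))) i)"
    define nn where "nn = (\<lambda>\<omega> t. snd (alg c \<alpha> sel step \<omega> t) i)"
    have qqd: "d \<le> qq \<omega> t" for \<omega> t unfolding qq_def by (rule dle)
    have qq0: "0 \<le> qq \<omega> t" for \<omega> t unfolding qq_def by (rule q0)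
    have qq1: "qq \<omega> t \<le> 1" for \<omega> t unfolding qq_def by (rule q1)
    have nn0: "nn \<omega> 0 = 0" for \<omega> unfolding nn_def by simp
    have nnS: "nn \<omega> (Suc t) = (if \<exists>k. traj (sel (fst (alg c \<alpha> sel step \<omega> t))) (\<omega> t) k = i
                  then Suc (nn \<omega> t) else nn \<omega> t)" for \<omega> t
      unfolding nn_def by (simp add: Let_def)
    have sq_le: "norm ((qq \<omega> t * x)\<^sup>2) \<le> y\<^sup>2" if "0 \<le> x" "x \<le> y" for \<omega> t x y
    proof -
      have "qq \<omega> t * x \<le> x" using qq1[of \<omega> t] that(1) qq0[of \<omega> t] by (simp add: mult_left_le_one_le)
      then have "(qq \<omega> t * x)\<^sup>2 \<le> y\<^sup>2"
        using that qq0[of \<omega> t] by (intro power_mono) auto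
      then show ?thesis by simp
    qed
    have goal: "AE \<omega> in Omega p P. \<not> summable (\<lambda>t. qq \<omega> t * step t (nn \<omega> t))
                  \<and> summable (\<lambda>t. (qq \<omega> t * step t (nn \<omega> t))\<^sup>2)"
      using step_choice
    proof
      assume st: "step = (\<lambda>t n. \<beta> t)"
      show ?thesis
      proof (rule AE_I2, intro conjI)
        fix \<omega>
        show "\<not> summable (\<lambda>t. qq \<omega> t * step t (nn \<omega> t))"
          using div_mult[of \<beta> d "qq \<omega>", OF b0 beta_div dpos qqd] by (simp add: st)
        show "summable (\<lambda>t. (qq \<omega> t * step t (nn \<omega> t))\<^sup>2)"
          by (rule summable_comparison_test'[where N=0, OF beta_sq]) (use sq_le[OF b0 order_refl] in \<open>simp add: st\<close>)
      qed
    next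
      assume st: "step = (\<lambda>t n. \<beta> n)"
      obtain W where Ws: "W \<in> sets ?M" and Wpos: "emeasure ?M W > 0"
        and Wv: "\<forall>mu. policy A mu \<longrightarrow> (\<forall>w\<in>W. \<exists>k. traj mu w k = i)"
        using good_set[of A P p i] actions A2 reach_of_A1[of A p P i] A1 by blast
      have ae: "AE \<omega> in Omega p P. summable (\<lambda>t. (\<lambda>m. (\<beta> m)\<^sup>2) (cntW W \<omega> t))"
        unfolding Omega_def
        by (rule AE_summable_cnt[OF prob_iter Ws Wpos]) (simp_all add: beta_sq)
      show ?thesis
        using ae
      proof (rule eventually_mono)
        fix \<omega> assume s\<omega>: "summable (\<lambda>t. (\<lambda>m. (\<beta> m)\<^sup>2) (cntW W \<omega> t))"
        have cle: "cntW W \<omega> t \<le> nn \<omega> t" for t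
        proof (induction t)
          case 0 then show ?case by (simp add: cntW_def)
        next
          case (Suc t)
          show ?case
          proof (cases "\<omega> t \<in> W")
            case True
            then have "\<exists>k. traj (sel (fst (alg c \<alpha> sel step \<omega> t))) (\<omega> t) k = i"
              using Wv pol by blast
            then show ?thesis using Suc True by (simp add: cntW_Suc nnS)
          next
            case False
            then show ?thesis using Suc by (simp add: cntW_Suc nnS)
          qed
        qed
        have gs: "nn \<omega> (Suc t) = nn \<omega> t \<or> nn \<omega> (Suc t) = Suc (nn \<omega> t)" for t
          by (simp add: nnS)
        have nd: "\<not> summable (\<lambda>t. \<beta> (nn \<omega> t))"
          by (rule div_count[OF bpos beta_div nn0 gs])
        show "\<not> summable (\<lambda>t. qq \<omega> t * step t (nn \<omega> t)) \<and> summable (\<lambda>t. (qq \<omega> t * step t (nn \<omega> t))\<^sup>2)"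
        proof
          show "\<not> summable (\<lambda>t. qq \<omega> t * step t (nn \<omega> t))"
            using div_mult[of "\<lambda>t. \<beta> (nn \<omega> t)" d "qq \<omega>", OF b0 nd dpos qqd] by (simp add: st)
        next
          have lim: "(\<lambda>t. (\<lambda>m. (\<beta> m)\<^sup>2) (cntW W \<omega> t)) \<longlonglongrightarrow> 0"
            using s\<omega> by (rule summable_LIMSEQ_zero)
          have ev: "\<forall>\<^sub>F t in sequentially. T0 < cntW W \<omega> t"
          proof -
            have "\<forall>M. \<forall>\<^sub>F t in sequentially. M < cntW W \<omega> t"
              by (rule pos_tendsto_contra[of "\<lambda>m. (\<beta> m)\<^sup>2" "cntW W \<omega>", OF _ lim]) (intro zero_less_power bpos)
            then show ?thesis by blast
          qed
          have "\<forall>\<^sub>F t in sequentially. norm ((qq \<omega> t * step t (nn \<omega> t))\<^sup>2) \<le> (\<lambda>m. (\<beta> m)\<^sup>2) (cntW W \<omega> t)"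
            using ev
          proof (rule eventually_mono)
            fix t assume T: "T0 < cntW W \<omega> t"
            have "\<beta> (nn \<omega> t) \<le> \<beta> (cntW W \<omega> t)" using beta_mono T cle[of t] by blast
            then show "norm ((qq \<omega> t * step t (nn \<omega> t))\<^sup>2) \<le> (\<lambda>m. (\<beta> m)\<^sup>2) (cntW W \<omega> t)"
              using sq_le[OF b0] by (simp add: st)
          qed
          then show "summable (\<lambda>t. (qq \<omega> t * step t (nn \<omega> t))\<^sup>2)"
            by (rule summable_comparison_test_ev[OF _ s\<omega>])
        qed
      qed
    qed
    then show ?thesis by (simp add: qq_def nn_def)
  qed
  then show ?thesis by (simp add: AE_all_countable)
qed


end
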